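(* Let $|q|<1$ and let $(\alpha_n(a,k,q),\beta_n(a,k,q))$ be a WP-Bailey pair. Assume $|qa|<|z|$, that no denominator vanishes, and that all series below converge absolutely. Then \begin{multline*} \sum_{n=1}^{\infty} \frac{(q\sqrt{k},-q\sqrt{k},z;q)_{n}(q;q)_{n-1}}{(\sqrt{k},-\sqrt{k}, q k,q k/z;q)_{n}}\left( \frac{q a}{ z }\right)^{n} \beta_n(a,k,q) - \sum_{n=1}^{\infty}\frac{(z;q)_{n}(q;q)_{n-1}}{(q a ,q a/z;q)_n}\left (\frac{q a}{z}\right)^{n}\alpha_n(a,k,q)\\ =\sum_{n=1}^{\infty} \frac{(q\sqrt{k},-q\sqrt{k},k,z,k/a;q)_{n}}{(\sqrt{k},-\sqrt{k}, q k,q k/z,q a;q)_{n}(1-q^n)}\left( \frac{q a}{z }\right )^{n}. \end{multline*}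
   Context: Notation: $(x;q)_n=(1-x)(1-xq)\cdots(1-xq^{n-1})$, $(x;q)_0=1$, $(x;q)_\infty=\prod_{j\ge0}(1-xq^j)$, and $(x_1,\dots,x_m;q)_n=(x_1;q)_n\cdots(x_m;q)_n$. A WP-Bailey pair (with parameters $a,k$ and base $q$) is a pair of sequences $(\alpha_n(a,k,q),\beta_n(a,k,q))_{n\ge0}$ with $\alpha_0=\beta_0=1$ and, for $n>0$, $$\beta_n(a,k,q)=\sum_{j=0}^{n}\frac{(k/a;q)_{n-j}(k;q)_{n+j}}{(q;q)_{n-j}(aq;q)_{n+j}}\alpha_j(a,k,q).$$ *)

theory Defs
  imports "HOL-Analysis.Analysis"
begin

definition qpoch :: "complex \<Rightarrow> complex \<Rightarrow> nat \<Rightarrow> complex" where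
  "qpoch x q n = (\<Prod>j<n. (1 - x * q ^ j))"

definition WP_Bailey_pair ::
  "complex \<Rightarrow> complex \<Rightarrow> complex \<Rightarrow> (nat \<Rightarrow> complex) \<Rightarrow> (nat \<Rightarrow> complex) \<Rightarrow> bool" where
  "WP_Bailey_pair a k q \<alpha> \<beta> \<longleftrightarrow>
     \<alpha> 0 = 1 \<and> \<beta> 0 = 1 \<and>
     (\<forall>n>0. \<beta> n = (\<Sum>j=0..n. qpoch (k/a) q (n-j) * qpoch k q (n+j)
                              / (qpoch q q (n-j) * qpoch (a*q) q (n+j)) * \<alpha> j))"

end

theory Submission
  imports Defs
begin


lemma qpoch_0[simp]: "qpoch x q 0 = 1" by (simp add: qpoch_def)
lemma qpoch_Suc: "qpoch x q (Suc n) = qpoch x q n * (1 - x * q ^ n)"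
  by (simp add: qpoch_def)

lemma qpoch_add: "qpoch x q (m + n) = qpoch x q m * qpoch (x * q ^ m) q n"
  by (induction n) (simp_all add: qpoch_Suc power_add mult.assoc)

lemma qpoch_shift: "qpoch (q * x) q n * (1 - x) = qpoch x q n * (1 - x * q ^ n)"
proof (induction n)
  case (Suc n)
  have "qpoch (q * x) q (Suc n) * (1 - x) = (qpoch (q * x) q n * (1 - x)) * (1 - x * q ^ Suc n)"
    by (simp add: qpoch_Suc algebra_simps)
  also have "\<dots> = qpoch x q (Suc n) * (1 - x * q ^ Suc n)"
    using Suc by (simp add: qpoch_Suc)
  finally show ?case .
qed simp

lemma qpoch_nz_factor: "(\<And>n. qpoch x q n \<noteq> 0) \<Longrightarrow> 1 - x * q ^ i \<noteq> 0"
  by (metis mult_eq_0_iff qpoch_Suc)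

lemma qpoch_k_Suc: "qpoch k q (Suc n) = (1 - k) * qpoch (q * k) q n"
  using qpoch_shift[of q k n] by (simp add: qpoch_Suc mult.commute)

lemma qpoch_norm_upper:
  assumes q: "norm q < 1" and x: "norm x \<le> R"
  shows "norm (qpoch x q n) \<le> exp (R / (1 - norm q))"
proof -
  have "norm (qpoch x q n) = (\<Prod>i<n. norm (1 - x * q ^ i))"
    by (simp add: qpoch_def prod_norm)
  also have "\<dots> \<le> (\<Prod>i<n. exp (R * norm q ^ i))"
  proof (rule prod_mono, safe)
    fix i
    have "norm (1 - x * q ^ i) \<le> 1 + norm x * norm q ^ i"
      by (metis norm_triangle_ineq4 norm_mult norm_one norm_power)
    also have "\<dots> \<le> 1 + R * norm q ^ i"
      using x by (simp add: mult_right_mono)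
    also have "\<dots> \<le> exp (R * norm q ^ i)" by (rule exp_ge_add_one_self)
    finally show "norm (1 - x * q ^ i) \<le> exp (R * norm q ^ i)" .
  qed simp
  also have "\<dots> = exp (\<Sum>i<n. R * norm q ^ i)" by (simp add: exp_sum)
  also have "\<dots> \<le> exp (R / (1 - norm q))"
  proof -
    have R0: "R \<ge> 0" using x norm_ge_zero order_trans by blast
    have gs: "(\<lambda>i. norm q ^ i) sums (1 / (1 - norm q))"
      using geometric_sums[of "norm q"] q by simp
    have "(\<Sum>i<n. norm q ^ i) \<le> 1 / (1 - norm q)"
      using sum_le_suminf[of "\<lambda>i. norm q ^ i" "{..<n}"] gs
      by (simp add: sums_iff)
    hence "R * (\<Sum>i<n. norm q ^ i) \<le> R * (1 / (1 - norm q))"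
      by (rule mult_left_mono) (use R0 in auto)
    hence "(\<Sum>i<n. R * norm q ^ i) \<le> R * (1 / (1 - norm q))"
      by (simp add: sum_distrib_left)
    thus ?thesis by simp
  qed
  finally show ?thesis .
qed

lemma weierstrass_prod:
  fixes t :: "nat \<Rightarrow> real"
  assumes "\<And>i. 0 \<le> t i" "\<And>i. t i \<le> 1"
  shows "(\<Prod>i<n. (1 - t i)) \<ge> 1 - (\<Sum>i<n. t i)"
proof (induction n)
  case (Suc n)
  let ?P = "\<Prod>i<n. (1 - t i)" and ?S = "\<Sum>i<n. t i"
  have S0: "?S \<ge> 0" using assms by (simp add: sum_nonneg)
  have "?P * (1 - t n) \<ge> (1 - ?S) * (1 - t n)"
    using Suc assms by (simp add: mult_right_mono)
  moreover have "(1 - ?S) * (1 - t n) \<ge> 1 - ?S - t n"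
    using S0 assms(1)[of n] by (simp add: algebra_simps)
  ultimately show ?case by simp
qed simp

lemma qpoch_norm_lower_half:
  assumes q: "norm q < 1" and y: "norm y / (1 - norm q) \<le> 1/2"
  shows "norm (qpoch y q n) \<ge> 1/2"
proof -
  have q1: "1 - norm q > 0" using q by simp
  have ny: "norm y \<le> 1/2"
  proof -
    have "norm y \<le> norm y / (1 - norm q)"
      using q1 norm_ge_zero[of q] by (simp add: divide_simps mult_left_le)
    thus ?thesis using y by (simp only: times_divide_eq_right mult_1_right)
  qed
  have t1: "norm y * norm q ^ i \<le> 1" for i
  proof -
    have "norm q ^ i \<le> 1" using q by (simp add: power_le_one)
    hence "norm y * norm q ^ i \<le> norm y" by (simp add: mult_left_le)
    thus ?thesis using ny by linarith
  qed
  have "(\<Prod>i<n. (1 - norm y * norm q ^ i)) \<le> (\<Prod>i<n. norm (1 - y * q ^ i))"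
  proof (rule prod_mono, safe)
    fix i show "0 \<le> 1 - norm y * norm q ^ i" using t1[of i] by simp
    have "1 - norm (y * q ^ i) \<le> norm (1 - y * q ^ i)"
      by (metis norm_one norm_triangle_ineq2)
    thus "1 - norm y * norm q ^ i \<le> norm (1 - y * q ^ i)" by (simp add: norm_mult norm_power)
  qed
  moreover have "(\<Prod>i<n. (1 - norm y * norm q ^ i)) \<ge> 1 - (\<Sum>i<n. norm y * norm q ^ i)"
    by (rule weierstrass_prod) (simp_all add: t1)
  moreover have "(\<Sum>i<n. norm y * norm q ^ i) \<le> 1/2"
  proof -
    have gs: "(\<lambda>i. norm q ^ i) sums (1 / (1 - norm q))"
      using geometric_sums[of "norm q"] q by simp
    have "(\<Sum>i<n. norm q ^ i) \<le> 1 / (1 - norm q)"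
      using sum_le_suminf[of "\<lambda>i. norm q ^ i" "{..<n}"] gs
      by (simp add: sums_iff)
    hence "norm y * (\<Sum>i<n. norm q ^ i) \<le> norm y * (1 / (1 - norm q))"
      by (rule mult_left_mono) auto
    hence "(\<Sum>i<n. norm y * norm q ^ i) \<le> norm y * (1 / (1 - norm q))"
      by (simp add: sum_distrib_left)
    thus ?thesis using y by (simp only: times_divide_eq_right mult_1_right)
  qed
  moreover have "norm (qpoch y q n) = (\<Prod>i<n. norm (1 - y * q ^ i))"
    by (simp add: qpoch_def prod_norm)
  ultimately show ?thesis by linarith
qed

lemma qpoch_inv_bounded:
  assumes q: "norm q < 1" and nz: "\<And>n. qpoch x q n \<noteq> 0"
  shows "\<exists>M>0. \<forall>n. norm (inverse (qpoch x q n)) \<le> M"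
proof -
  have q1: "1 - norm q > 0" using q by simp
  have "(\<lambda>N. norm x * norm q ^ N / (1 - norm q)) \<longlonglongrightarrow> norm x * 0 / (1 - norm q)"
    by (intro tendsto_intros) (use q in auto)
  hence "eventually (\<lambda>N. norm x * norm q ^ N / (1 - norm q) < 1/2) sequentially"
    by (intro order_tendstoD) auto
  then obtain N where N: "norm x * norm q ^ N / (1 - norm q) < 1/2"
    by (auto simp: eventually_at_top_linorder)
  define \<delta> where "\<delta> = Min ((\<lambda>n. norm (qpoch x q n)) ` {..N})"
  have dpos: "\<delta> > 0" unfolding \<delta>_def using nz by (subst Min_gr_iff) auto
  have dle: "\<delta> \<le> norm (qpoch x q n)" if "n \<le> N" for n
    unfolding \<delta>_def using that by (intro Min_le) auto
  have low: "norm (qpoch x q n) \<ge> \<delta> / 2" for n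
  proof (cases "n \<le> N")
    case True thus ?thesis using dle[OF True] dpos by simp
  next
    case False
    then obtain m where n: "n = N + m" by (metis le_add_diff_inverse nat_le_linear)
    have "norm (qpoch (x * q ^ N) q m) \<ge> 1/2"
      by (rule qpoch_norm_lower_half) (use q N in \<open>auto simp: norm_mult norm_power\<close>)
    moreover have "norm (qpoch x q N) \<ge> \<delta>" using dle by simp
    ultimately have "norm (qpoch x q N) * norm (qpoch (x * q ^ N) q m) \<ge> \<delta> * (1/2)"
      using dpos by (intro mult_mono) auto
    thus ?thesis by (simp add: n qpoch_add norm_mult)
  qed
  show ?thesis
  proof (intro exI[of _ "2 / \<delta>"] conjI allI)
    show "0 < 2 / \<delta>" using dpos by simp
    fix n
    have "norm (inverse (qpoch x q n)) = 1 / norm (qpoch x q n)" by (simp add: norm_inverse divide_inverse)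
    also have "\<dots> \<le> 1 / (\<delta> / 2)"
    proof -
      have "norm (qpoch x q n) > 0" using low[of n] dpos by linarith
      thus ?thesis using low[of n] dpos by (intro divide_left_mono) auto
    qed
    finally show "norm (inverse (qpoch x q n)) \<le> 2 / \<delta>" by simp
  qed
qed




definition Ef :: "complex \<Rightarrow> complex \<Rightarrow> complex \<Rightarrow> complex \<Rightarrow> nat \<Rightarrow> complex" where
  "Ef a k q z N = (1 - k * q ^ (2 * N)) / (1 - k) * qpoch z q N * qpoch q q (N - 1)
      / (qpoch (q * k) q N * qpoch (q * k / z) q N) * (q * a / z) ^ N"
definition cc :: "complex \<Rightarrow> complex \<Rightarrow> complex \<Rightarrow> nat \<Rightarrow> nat \<Rightarrow> complex" where
  "cc a k q N j = qpoch (k/a) q (N-j) * qpoch k q (N+j) / (qpoch q q (N-j) * qpoch (a*q) q (N+j))"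
definition Gf :: "complex \<Rightarrow> complex \<Rightarrow> complex \<Rightarrow> nat \<Rightarrow> complex" where
  "Gf a q z j = qpoch z q j * qpoch q q (j-1) / (qpoch (q*a) q j * qpoch (q*a/z) q j) * (q*a/z)^j"
definition Tf where "Tf a k q z j m = Ef a k q z (j+m) * cc a k q (j+m) j"
definition rho where
  "rho a q z j = (1 - z*q^j)*(1-q^j)*q*a/((1-a*q*q^j)*(z-a*q*q^j))"
definition Kf where "Kf a q z j = -(1 - a*q*q^j*q^j)*z/((1-a*q*q^j)*(z-a*q*q^j))"
definition Df where "Df a k q z n = qpoch z q n * qpoch (k/a) q (n-1) * (q*a/z)^n
   / (qpoch (q*k/z) q (n-1) * qpoch (a*q) q n * (1 - q*a/z))"
definition Pf where
  "Pf a k q z j m = qpoch z q (Suc (j+m)) * qpoch q q (j+m) * (q*a/z)^(Suc (j+m))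
      / ((1-k) * qpoch (q*k) q (j+m) * qpoch (q*k/z) q (j+m))
      * qpoch (k/a) q m * qpoch k q (Suc (2*j+m)) / (qpoch q q m * qpoch (a*q) q (Suc (2*j+m)))"
definition Vf where "Vf a k q z j m = Kf a q z j * Pf a k q z j m"

lemma idx1: "Suc j + m + Suc j = Suc (Suc (2*j+m))" "Suc j + m - Suc j = m"
  "j + Suc m + j = Suc (2*j+m)" "j + Suc m - j = Suc m" "Suc j + m - 1 = j + m"
  "j + Suc m - 1 = j + m" "2 * (Suc j + m) = Suc (Suc (2*(j+m)))" "2 * (j + Suc m) = Suc (Suc (2*(j+m)))"
  by simp_all


lemma T_Suc_P:
  assumes nz: "qpoch (q*k) q (j+m) \<noteq> 0" "qpoch (q*k/z) q (j+m) \<noteq> 0" "qpoch q q m \<noteq> 0"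
     "qpoch (a*q) q (Suc (2*j+m)) \<noteq> 0" "1 - k \<noteq> 0" "z \<noteq> 0"
     "1 - k * q^Suc(j+m) \<noteq> 0" "z - k * q^Suc(j+m) \<noteq> 0" "1 - a*q*q^Suc(j+m)*q^j \<noteq> 0"
  shows "Tf a k q z (Suc j) m = Pf a k q z j m * ((1 - k*(q^Suc(j+m))^2)*z/((1-k*q^Suc(j+m))*(z-k*q^Suc(j+m)))
     * ((1 - k*q^Suc(j+m)*q^j)/(1 - a*q*q^Suc(j+m)*q^j)))"
proof -
  have pw: "q^(Suc (2*j+m)) = q^Suc(j+m)*q^j" by (simp only: mult_2 add_Suc[symmetric] power_add) (simp add: mult_ac)
  have e1: "qpoch (q*k) q (Suc (j+m)) = qpoch (q*k) q (j+m) * (1 - k*q^Suc(j+m))"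
    by (simp add: qpoch_Suc)
  have e2: "qpoch (q*k/z) q (Suc (j+m)) = qpoch (q*k/z) q (j+m) * ((z - k*q^Suc(j+m))/z)"
    using nz by (simp add: qpoch_Suc field_simps)
  have e3: "qpoch k q (Suc (Suc (2*j+m))) = qpoch k q (Suc (2*j+m)) * (1 - k*q^Suc(j+m)*q^j)"
    by (simp only: qpoch_Suc[of k q "Suc (2*j+m)"] pw mult.assoc)
  have e4: "qpoch (a*q) q (Suc (Suc (2*j+m))) = qpoch (a*q) q (Suc (2*j+m)) * (1 - a*q*q^Suc(j+m)*q^j)"
    by (simp only: qpoch_Suc[of "a*q" q "Suc (2*j+m)"] pw mult.assoc)
  have e5: "q ^ (2 * Suc (j+m)) = (q^Suc(j+m))^2" by (simp only: power_mult[symmetric] mult.commute)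
  have "Tf a k q z (Suc j) m = (1 - k * q ^ (2 * Suc (j+m))) / (1 - k) * qpoch z q (Suc (j+m)) * qpoch q q (j+m)
      / (qpoch (q * k) q (Suc (j+m)) * qpoch (q * k / z) q (Suc (j+m))) * (q * a / z) ^ (Suc (j+m))
      * (qpoch (k/a) q m * qpoch k q (Suc (Suc (2*j+m))) / (qpoch q q m * qpoch (a*q) q (Suc (Suc (2*j+m)))))"
    unfolding Tf_def Ef_def cc_def by (simp add: idx1 mult_2 add_ac)
  also have "\<dots> = Pf a k q z j m * ((1 - k*(q^Suc(j+m))^2)*z/((1-k*q^Suc(j+m))*(z-k*q^Suc(j+m)))
     * ((1 - k*q^Suc(j+m)*q^j)/(1 - a*q*q^Suc(j+m)*q^j)))"
    unfolding e1 e2 e3 e4 e5 Pf_def using nz by (simp add: field_simps)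
  finally show ?thesis .
qed

lemma T_P2:
  assumes nz: "qpoch (q*k) q (j+m) \<noteq> 0" "qpoch (q*k/z) q (j+m) \<noteq> 0" "qpoch q q m \<noteq> 0"
     "qpoch (a*q) q (Suc (2*j+m)) \<noteq> 0" "1 - k \<noteq> 0" "z \<noteq> 0" "a \<noteq> 0"
     "1 - k * q^Suc(j+m) \<noteq> 0" "z - k * q^Suc(j+m) \<noteq> 0" "1 - q*q^m \<noteq> 0"
  shows "Tf a k q z j (Suc m) = Pf a k q z j m * ((1 - k*(q^Suc(j+m))^2)*z/((1-k*q^Suc(j+m))*(z-k*q^Suc(j+m)))
     * ((a - k*q^m)/(a*(1 - q*q^m))))"
proof -
  have e1: "qpoch (q*k) q (Suc (j+m)) = qpoch (q*k) q (j+m) * (1 - k*q^Suc(j+m))"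
    by (simp add: qpoch_Suc)
  have e2: "qpoch (q*k/z) q (Suc (j+m)) = qpoch (q*k/z) q (j+m) * ((z - k*q^Suc(j+m))/z)"
    using nz by (simp add: qpoch_Suc field_simps)
  have e3: "qpoch (k/a) q (Suc m) = qpoch (k/a) q m * ((a - k*q^m)/a)" using nz by (simp add: qpoch_Suc field_simps)
  have e4: "qpoch q q (Suc m) = qpoch q q m * (1 - q*q^m)" by (simp add: qpoch_Suc)
  have e5: "q ^ (2 * Suc (j+m)) = (q^Suc(j+m))^2" by (simp only: power_mult[symmetric] mult.commute)
  have "Tf a k q z j (Suc m) = (1 - k * q ^ (2 * Suc (j+m))) / (1 - k) * qpoch z q (Suc (j+m)) * qpoch q q (j+m)
      / (qpoch (q * k) q (Suc (j+m)) * qpoch (q * k / z) q (Suc (j+m))) * (q * a / z) ^ (Suc (j+m))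
      * (qpoch (k/a) q (Suc m) * qpoch k q (Suc (2*j+m)) / (qpoch q q (Suc m) * qpoch (a*q) q (Suc (2*j+m))))"
    unfolding Tf_def Ef_def cc_def by (simp add: idx1 mult_2 add_ac)
  also have "\<dots> = Pf a k q z j m * ((1 - k*(q^Suc(j+m))^2)*z/((1-k*q^Suc(j+m))*(z-k*q^Suc(j+m)))
     * ((a - k*q^m)/(a*(1 - q*q^m))))"
    unfolding e1 e2 e3 e4 e5 Pf_def using nz by (simp add: field_simps)
  finally show ?thesis .
qed

lemma P_Suc_abs:
  fixes a q z K1 Az Aq Ak Akz Aka Akk Aq2 Aaq W B1 B2 B3 B4 B5 B6 B7 B8 :: complex
  assumes nz: "K1 \<noteq> 0" "Ak \<noteq> 0" "Akz \<noteq> 0" "Aq2 \<noteq> 0" "Aaq \<noteq> 0" "B3 \<noteq> 0" "B4 \<noteq> 0"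
    "B7 \<noteq> 0" "B8 \<noteq> 0" "z \<noteq> 0" "a \<noteq> 0"
  shows "(Az*B1) * (Aq*B2) * (W*(q*a/z)) / (K1 * (Ak*B3) * (Akz*(B4/z)))
        * (Aka*(B5/a)) * (Akk*B6) / ((Aq2*B7) * (Aaq*B8))
   = Az*Aq*W/(K1*Ak*Akz) * Aka*Akk/(Aq2*Aaq) *
     (B1*B2*q*B5*B6/(B3*B4*B7*B8))"
  using nz by (simp add: field_simps)

lemma comb_abs:
  fixes P r1 r2 r3 rh K :: complex
  assumes "r1 - rh*r2 = K*r3 - K"
  shows "P*r1 - rh*(P*r2) = K*(P*r3) - K*P"
proof -
  have "P*r1 - rh*(P*r2) = P*(r1 - rh*r2)" by (simp add: algebra_simps)
  also have "\<dots> = P*(K*r3 - K)" using assms by simp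
  also have "\<dots> = K*(P*r3) - K*P" by (simp add: algebra_simps)
  finally show ?thesis .
qed

lemma V_Suc_P:
  assumes nz: "qpoch (q*k) q (j+m) \<noteq> 0" "qpoch (q*k/z) q (j+m) \<noteq> 0" "qpoch q q m \<noteq> 0"
     "qpoch (a*q) q (Suc (2*j+m)) \<noteq> 0" "1 - k \<noteq> 0" "z \<noteq> 0" "a \<noteq> 0"
     "1 - k * q^Suc(j+m) \<noteq> 0" "z - k * q^Suc(j+m) \<noteq> 0" "1 - q*q^m \<noteq> 0"
     "1 - a*q*q^Suc(j+m)*q^j \<noteq> 0"
  shows "Vf a k q z j (Suc m) = Kf a q z j * Pf a k q z j m *
     ((1 - z*q^Suc(j+m))*(1-q^Suc(j+m))*q*(a-k*q^m)*(1-k*q^Suc(j+m)*q^j)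
      /((1-k*q^Suc(j+m))*(z-k*q^Suc(j+m))*(1-q*q^m)*(1-a*q*q^Suc(j+m)*q^j)))"
proof -
  have pw: "q^(Suc (2*j+m)) = q^Suc(j+m)*q^j" by (simp only: mult_2 add_Suc[symmetric] power_add) (simp add: mult_ac)
  have e1: "qpoch (q*k) q (Suc (j+m)) = qpoch (q*k) q (j+m) * (1 - k*q^Suc(j+m))"
    by (simp add: qpoch_Suc)
  have e2: "qpoch (q*k/z) q (Suc (j+m)) = qpoch (q*k/z) q (j+m) * ((z - k*q^Suc(j+m))/z)"
    using nz by (simp add: qpoch_Suc field_simps)
  have e3: "qpoch (k/a) q (Suc m) = qpoch (k/a) q m * ((a - k*q^m)/a)" using nz by (simp add: qpoch_Suc field_simps)
  have e4: "qpoch q q (Suc m) = qpoch q q m * (1 - q*q^m)" by (simp add: qpoch_Suc)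
  have e5: "qpoch k q (Suc (Suc (2*j+m))) = qpoch k q (Suc (2*j+m)) * (1 - k*q^Suc(j+m)*q^j)"
    by (simp only: qpoch_Suc[of k q "Suc (2*j+m)"] pw mult.assoc)
  have e6: "qpoch (a*q) q (Suc (Suc (2*j+m))) = qpoch (a*q) q (Suc (2*j+m)) * (1 - a*q*q^Suc(j+m)*q^j)"
    by (simp only: qpoch_Suc[of "a*q" q "Suc (2*j+m)"] pw mult.assoc)
  have e7: "qpoch z q (Suc (Suc (j+m))) = qpoch z q (Suc (j+m)) * (1 - z*q^Suc(j+m))"
    by (simp only: qpoch_Suc[of z q "Suc (j+m)"])
  have e8: "qpoch q q (Suc (j+m)) = qpoch q q (j+m) * (1 - q^Suc(j+m))"
    by (simp add: qpoch_Suc)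
  have e9: "(q*a/z)^(Suc (Suc (j+m))) = (q*a/z)^(Suc (j+m)) * (q*a/z)"
    by (simp only: power_Suc2)
  have "Pf a k q z j (Suc m) = (qpoch z q (Suc (Suc (j+m))) * qpoch q q (Suc (j+m)) * (q*a/z)^(Suc (Suc (j+m)))
      / ((1-k) * qpoch (q*k) q (Suc (j+m)) * qpoch (q*k/z) q (Suc (j+m)))
      * qpoch (k/a) q (Suc m) * qpoch k q (Suc (Suc (2*j+m))) / (qpoch q q (Suc m) * qpoch (a*q) q (Suc (Suc (2*j+m)))))"
    unfolding Pf_def by simp
  also have "\<dots> = Pf a k q z j m *
     ((1 - z*q^Suc(j+m))*(1-q^Suc(j+m))*q*(a-k*q^m)*(1-k*q^Suc(j+m)*q^j)
      /((1-k*q^Suc(j+m))*(z-k*q^Suc(j+m))*(1-q*q^m)*(1-a*q*q^Suc(j+m)*q^j)))"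
    unfolding e1 e2 e3 e4 e5 e6 e7 e8 e9 Pf_def by (rule P_Suc_abs) (use nz in simp_all)
  finally show ?thesis unfolding Vf_def by (simp only: mult.assoc)
qed

lemma rat_R1:
  fixes a k q z Y M X D1 D2 D3 D4 D5 D6 :: complex
  assumes X: "X = q*Y*M"
  assumes hD: "D1 = 1 - k*X" "D2 = z - k*X" "D3 = 1 - a*q*X*Y" "D4 = 1 - q*M" "D5 = 1 - a*q*Y" "D6 = z - a*q*Y"
  assumes nz: "a \<noteq> 0" "D1 \<noteq> 0" "D2 \<noteq> 0" "D3 \<noteq> 0" "D4 \<noteq> 0" "D5 \<noteq> 0" "D6 \<noteq> 0"
  shows "(1-k*X^2)*z/(D1*D2) * ((1-k*X*Y)/D3)
     - (1-z*Y)*(1-Y)*q*a/(D5*D6) * ((1-k*X^2)*z/(D1*D2) * ((a-k*M)/(a*D4)))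
   = -(1-a*q*Y*Y)*z/(D5*D6) * ((1-z*X)*(1-X)*q*(a-k*M)*(1-k*X*Y)/(D1*D2*D4*D3))
     - (-(1-a*q*Y*Y)*z/(D5*D6))"
proof -
  have poly: "(1-k*X^2)*((1-k*X*Y)*D4*D5*D6-(1-z*Y)*(1-Y)*q*(a-k*M)*D3)
    = -(1-a*q*Y*Y)*((1-z*X)*(1-X)*q*(a-k*M)*(1-k*X*Y)-D1*D2*D3*D4)"
    unfolding hD X by (simp add: algebra_simps power2_eq_square)
  define Den where "Den = D1*D2*D3*D4*D5*D6*a"
  have Den0: "Den \<noteq> 0" using nz by (simp add: Den_def)
  have p1: "(1-k*X^2)*z/(D1*D2) * ((1-k*X*Y)/D3) * Den = (1-k*X^2)*z*(1-k*X*Y)*D4*D5*D6*a"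
    using nz unfolding Den_def by (simp add: field_simps)
  have p2: "(1-z*Y)*(1-Y)*q*a/(D5*D6) * ((1-k*X^2)*z/(D1*D2) * ((a-k*M)/(a*D4))) * Den
     = (1-z*Y)*(1-Y)*q*a*(1-k*X^2)*z*(a-k*M)*D3"
    using nz unfolding Den_def by (simp add: field_simps)
  have p3: "-(1-a*q*Y*Y)*z/(D5*D6) * ((1-z*X)*(1-X)*q*(a-k*M)*(1-k*X*Y)/(D1*D2*D4*D3)) * Den
     = -(1-a*q*Y*Y)*z*(1-z*X)*(1-X)*q*(a-k*M)*(1-k*X*Y)*a"
    using nz unfolding Den_def by (simp add: field_simps)
  have p4: "(-(1-a*q*Y*Y)*z/(D5*D6)) * Den = -(1-a*q*Y*Y)*z*D1*D2*D3*D4*a"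
    using nz unfolding Den_def by (simp add: field_simps)
  have L: "((1-k*X^2)*z/(D1*D2) * ((1-k*X*Y)/D3)
     - (1-z*Y)*(1-Y)*q*a/(D5*D6) * ((1-k*X^2)*z/(D1*D2) * ((a-k*M)/(a*D4)))) * Den
     = (1-k*X^2)*z*(1-k*X*Y)*D4*D5*D6*a - (1-z*Y)*(1-Y)*q*a*(1-k*X^2)*z*(a-k*M)*D3"
    using p1 p2 by (metis left_diff_distrib)
  have R: "(-(1-a*q*Y*Y)*z/(D5*D6) * ((1-z*X)*(1-X)*q*(a-k*M)*(1-k*X*Y)/(D1*D2*D4*D3))
     - (-(1-a*q*Y*Y)*z/(D5*D6))) * Den
     = -(1-a*q*Y*Y)*z*(1-z*X)*(1-X)*q*(a-k*M)*(1-k*X*Y)*a - -(1-a*q*Y*Y)*z*D1*D2*D3*D4*a"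
    using p3 p4 by (metis left_diff_distrib)
  have "a*z*((1-k*X^2)*((1-k*X*Y)*D4*D5*D6-(1-z*Y)*(1-Y)*q*(a-k*M)*D3))
        = a*z*(-(1-a*q*Y*Y)*((1-z*X)*(1-X)*q*(a-k*M)*(1-k*X*Y)-D1*D2*D3*D4))"
    using poly by simp
  hence "(1-k*X^2)*z*(1-k*X*Y)*D4*D5*D6*a - (1-z*Y)*(1-Y)*q*a*(1-k*X^2)*z*(a-k*M)*D3
      = -(1-a*q*Y*Y)*z*(1-z*X)*(1-X)*q*(a-k*M)*(1-k*X*Y)*a - -(1-a*q*Y*Y)*z*D1*D2*D3*D4*a"
    by (simp add: algebra_simps)
  with L R show ?thesis using Den0 by (metis mult_cancel_right)
qed

lemma R1:
  assumes nz: "qpoch (q*k) q (j+m) \<noteq> 0" "qpoch (q*k/z) q (j+m) \<noteq> 0" "qpoch q q m \<noteq> 0"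
     "qpoch (a*q) q (Suc (2*j+m)) \<noteq> 0" "1 - k \<noteq> 0" "z \<noteq> 0" "a \<noteq> 0"
     "1 - k * q^Suc(j+m) \<noteq> 0" "z - k * q^Suc(j+m) \<noteq> 0" "1 - q*q^m \<noteq> 0"
     "1 - a*q*q^Suc(j+m)*q^j \<noteq> 0" "1 - a*q*q^j \<noteq> 0" "z - a*q*q^j \<noteq> 0"
  shows "Tf a k q z (Suc j) m - rho a q z j * Tf a k q z j (Suc m) = Vf a k q z j (Suc m) - Vf a k q z j m"
proof -
  have X: "q^Suc(j+m) = q*q^j*q^m" by (simp add: power_add)
  have r: "(1-k*(q^Suc(j+m))^2)*z/((1-k*q^Suc(j+m))*(z-k*q^Suc(j+m))) * ((1-k*q^Suc(j+m)*q^j)/(1-a*q*q^Suc(j+m)*q^j))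
     - (1-z*q^j)*(1-q^j)*q*a/((1-a*q*q^j)*(z-a*q*q^j)) * ((1-k*(q^Suc(j+m))^2)*z/((1-k*q^Suc(j+m))*(z-k*q^Suc(j+m))) * ((a-k*q^m)/(a*(1-q*q^m))))
   = -(1-a*q*q^j*q^j)*z/((1-a*q*q^j)*(z-a*q*q^j)) * ((1-z*q^Suc(j+m))*(1-q^Suc(j+m))*q*(a-k*q^m)*(1-k*q^Suc(j+m)*q^j)/((1-k*q^Suc(j+m))*(z-k*q^Suc(j+m))*(1-q*q^m)*(1-a*q*q^Suc(j+m)*q^j)))
     - (-(1-a*q*q^j*q^j)*z/((1-a*q*q^j)*(z-a*q*q^j)))"
    by (rule rat_R1[OF X refl refl refl refl refl refl]) (use nz in auto)
  show ?thesis
    unfolding T_Suc_P[OF nz(1-6) nz(8,9,11)] T_P2[OF nz(1-10)] V_Suc_P[OF nz(1-11)]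
    unfolding Vf_def rho_def Kf_def
    using comb_abs[OF r, of "Pf a k q z j m"] by (simp only: mult.assoc)
qed




lemma B_abs:
  fixes a q z K1 Az Aq Ak Akz Aka Aaq W C1 Bz Ba Zq B1 B5 :: complex
  assumes nz: "K1 \<noteq> 0" "Ak \<noteq> 0" "Aq \<noteq> 0" "Akz \<noteq> 0" "Aaq \<noteq> 0" "Bz \<noteq> 0" "Ba \<noteq> 0" "Zq \<noteq> 0"
    "z \<noteq> 0" "a \<noteq> 0"
  assumes hyp: "C1*Zq = Bz*Ba - B1*B5*q"
  shows "C1/K1 * Az * Aq/(Ak*(Akz*(Bz/z))) * W * (Aka*(K1*Ak)/(Aq*(Aaq*Ba)))
     = Az*Aka*W/(Akz*Aaq*(Zq/z)) - (Az*B1)*(Aka*(B5/a))*(W*(q*a/z))/((Akz*(Bz/z))*(Aaq*Ba)*(Zq/z))"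
proof -
  have "Az*Aka*W/(Akz*Aaq*(Zq/z)) - (Az*B1)*(Aka*(B5/a))*(W*(q*a/z))/((Akz*(Bz/z))*(Aaq*Ba)*(Zq/z))
      = Az*Aka*W*z*(Bz*Ba - B1*B5*q)/(Akz*Aaq*Zq*Bz*Ba)"
    using nz by (simp add: field_simps)
  also have "\<dots> = Az*Aka*W*z*(C1*Zq)/(Akz*Aaq*Zq*Bz*Ba)" by (simp only: hyp)
  also have "\<dots> = C1/K1 * Az * Aq/(Ak*(Akz*(Bz/z))) * W * (Aka*(K1*Ak)/(Aq*(Aaq*Ba)))"
    using nz by (simp add: field_simps)
  finally show ?thesis by simp
qed

lemma R0_abs:
  fixes a q z K1 Az Aq Ak Akz Akk Aaq W B1 B2 B3 B4 D5 D6 :: complex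
  assumes nz: "K1 \<noteq> 0" "Ak \<noteq> 0" "Akz \<noteq> 0" "Aaq \<noteq> 0" "B4 \<noteq> 0" "D5 \<noteq> 0" "D6 \<noteq> 0" "z \<noteq> 0"
  shows "-B4*z/(D5*D6) * ((Az*B1) * (Aq*B2) * (W*(q*a/z)) / (K1 * Ak * Akz) * 1 * (Akk*B3) / (1 * (Aaq*B4)))
    = - (B1*B2*q*a/(D5*D6)) * (B3/K1 * Az * Aq/(Ak*Akz) * W * (1 * Akk/(1*Aaq)))"
  using nz by (simp add: field_simps)

lemma G_abs:
  fixes a q z Az Aq Aa Aaz W B1 B2 D5 D6 :: complex
  assumes nz: "Aa \<noteq> 0" "Aaz \<noteq> 0" "D5 \<noteq> 0" "D6 \<noteq> 0" "z \<noteq> 0"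
  shows "(Az*B1) * (Aq*B2) / ((Aa*D5) * (Aaz*(D6/z))) * (W*(q*a/z))
    = B1*B2*q*a/(D5*D6) * (Az * Aq / (Aa * Aaz) * W)"
  using nz by (simp add: field_simps)


locale wpsetup =
  fixes a k q z :: complex
  assumes hq: "norm q < 1" and hz: "norm (q * a) < norm z" and ha: "a \<noteq> 0" and hk: "1 - k \<noteq> 0"
    and h_q: "\<And>n. qpoch q q n \<noteq> 0" and h_aq: "\<And>n. qpoch (a*q) q n \<noteq> 0"
    and h_qk: "\<And>n. qpoch (q*k) q n \<noteq> 0" and h_qkz: "\<And>n. qpoch (q*k/z) q n \<noteq> 0"
    and h_qa: "\<And>n. qpoch (q*a) q n \<noteq> 0" and h_qaz: "\<And>n. qpoch (q*a/z) q n \<noteq> 0"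
begin

lemma z0: "z \<noteq> 0" using hz by auto
lemma zqa: "z - q*a \<noteq> 0" using hz by auto

lemma f_qk: "1 - k*q^Suc n \<noteq> 0" using qpoch_nz_factor[OF h_qk, of n] by (simp add: mult_ac)
lemma f_qkz: "z - k*q^Suc n \<noteq> 0"
proof
  assume "z - k*q^Suc n = 0"
  hence "1 - q*k/z*q^n = 0" using z0 by (simp add: field_simps)
  thus False using qpoch_nz_factor[OF h_qkz, of n] by simp
qed
lemma f_q: "1 - q*q^n \<noteq> 0" using qpoch_nz_factor[OF h_q, of n] by simp
lemma f_q': "1 - q^Suc n \<noteq> 0" using f_q by simp
lemma f_aq: "1 - a*q*q^n \<noteq> 0" using qpoch_nz_factor[OF h_aq, of n] by simp
lemma f_qa: "1 - a*q*q^n \<noteq> 0" by (rule f_aq)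
lemma f_qaz: "z - a*q*q^n \<noteq> 0"
proof
  assume "z - a*q*q^n = 0"
  hence "1 - q*a/z*q^n = 0" using z0 by (simp add: field_simps)
  thus False using qpoch_nz_factor[OF h_qaz, of n] by simp
qed

lemma R1': "Tf a k q z (Suc j) m - rho a q z j * Tf a k q z j (Suc m) = Vf a k q z j (Suc m) - Vf a k q z j m"
proof (rule R1)
  show "1 - a * q * q ^ Suc (j + m) * q ^ j \<noteq> 0"
    using f_aq[of "Suc (j+m) + j"] by (simp add: power_add mult_ac)
qed (use h_qk h_qkz h_q h_aq hk z0 ha f_qk f_qkz f_q f_aq f_qaz in auto)

lemma R0': "Vf a k q z (Suc i) 0 = - rho a q z (Suc i) * Tf a k q z (Suc i) 0"
proof -
  define j where "j = Suc i"
  have p2: "q^(2*j) = q^j*q^j" by (simp add: mult_2 power_add)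
  have e1: "qpoch z q (Suc j) = qpoch z q j * (1 - z*q^j)" by (simp add: qpoch_Suc)
  have e2: "qpoch q q j = qpoch q q i * (1 - q^j)" by (simp add: j_def qpoch_Suc)
  have e3: "qpoch k q (Suc (2*j)) = qpoch k q (2*j) * (1 - k*q^j*q^j)" by (simp only: qpoch_Suc p2 mult.assoc)
  have e4: "qpoch (a*q) q (Suc (2*j)) = qpoch (a*q) q (2*j) * (1 - a*q*q^j*q^j)" by (simp only: qpoch_Suc p2 mult.assoc)
  have e5: "(q*a/z)^Suc j = (q*a/z)^j * (q*a/z)" by (simp only: power_Suc2)
  have v: "Vf a k q z j 0 = -(1-a*q*q^j*q^j)*z/((1-a*q*q^j)*(z-a*q*q^j)) * ((qpoch z q j * (1 - z*q^j))
     * (qpoch q q i * (1 - q^j)) * ((q*a/z)^j*(q*a/z)) / ((1-k) * qpoch (q*k) q j * qpoch (q*k/z) q j)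
     * 1 * (qpoch k q (2*j) * (1 - k*q^j*q^j)) / (1 * (qpoch (a*q) q (2*j) * (1 - a*q*q^j*q^j))))"
    unfolding Vf_def Kf_def Pf_def add_0_right qpoch_0 e1 e2 e3 e4 e5 by (rule refl)
  have t: "Tf a k q z j 0 = (1 - k*q^j*q^j)/(1-k) * qpoch z q j * qpoch q q i / (qpoch (q*k) q j * qpoch (q*k/z) q j)
     * (q*a/z)^j * (1 * qpoch k q (2*j) / (1 * qpoch (a*q) q (2*j)))"
    unfolding Tf_def Ef_def cc_def by (simp add: j_def mult_2 power_add)
  have B4: "1 - a*q*q^j*q^j \<noteq> 0" using f_aq[of "2*j"] by (simp only: p2 mult.assoc not_False_eq_True)
  have r: "rho a q z j = (1 - z*q^j)*(1-q^j)*q*a/((1-a*q*q^j)*(z-a*q*q^j))" by (simp add: rho_def)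
  have "Vf a k q z j 0 = - rho a q z j * Tf a k q z j 0"
    unfolding v t r
    by (rule R0_abs) (use hk h_qk h_qkz h_aq z0 f_aq f_qaz B4 in \<open>simp_all add: p2[symmetric] mult.assoc[symmetric]\<close>)
  thus ?thesis by (simp add: j_def)
qed

lemma G_rec: "Gf a q z (Suc (Suc i)) = rho a q z (Suc i) * Gf a q z (Suc i)"
proof -
  define j where "j = Suc i"
  have e1: "qpoch z q (Suc j) = qpoch z q j * (1 - z*q^j)" by (simp add: qpoch_Suc)
  have e2: "qpoch q q j = qpoch q q i * (1 - q^j)" by (simp add: j_def qpoch_Suc)
  have e3: "qpoch (q*a) q (Suc j) = qpoch (q*a) q j * (1 - a*q*q^j)" by (simp add: qpoch_Suc mult_ac)
  have e4: "qpoch (q*a/z) q (Suc j) = qpoch (q*a/z) q j * ((z - a*q*q^j)/z)"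
    using z0 by (simp add: qpoch_Suc field_simps)
  have e5: "(q*a/z)^Suc j = (q*a/z)^j * (q*a/z)" by (simp only: power_Suc2)
  have "Gf a q z (Suc j) = rho a q z j * Gf a q z j"
    unfolding Gf_def diff_Suc_1 e1 e2 e3 e4 e5 rho_def
    by (simp only: j_def diff_Suc_1, rule G_abs) (use h_qa h_qaz f_aq[of "Suc i"] f_qaz[of "Suc i"] z0 in simp_all)
  thus ?thesis by (simp add: j_def)
qed

lemma B': "Tf a k q z 1 m = Df a k q z (Suc m) - Df a k q z (Suc (Suc m))"
proof -
  have e1: "qpoch (q*k/z) q (Suc m) = qpoch (q*k/z) q m * ((z - k*q^Suc m)/z)"
    using z0 by (simp add: qpoch_Suc field_simps)
  have e2: "qpoch k q (Suc (Suc m)) = (1-k) * qpoch (q*k) q (Suc m)" by (rule qpoch_k_Suc)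
  have e3: "qpoch (a*q) q (Suc (Suc m)) = qpoch (a*q) q (Suc m) * (1 - a*q*q^Suc m)"
    by (simp only: qpoch_Suc[of "a*q" q "Suc m"] mult.assoc)
  have e4: "qpoch z q (Suc (Suc m)) = qpoch z q (Suc m) * (1 - z*q^Suc m)"
    by (simp only: qpoch_Suc[of z q "Suc m"])
  have e5: "qpoch (k/a) q (Suc m) = qpoch (k/a) q m * ((a - k*q^m)/a)"
    using ha by (simp add: qpoch_Suc field_simps)
  have e6: "(q*a/z)^Suc (Suc m) = (q*a/z)^Suc m * (q*a/z)" by (simp only: power_Suc2)
  have e7: "1 - q*a/z = (z - q*a)/z" using z0 by (simp add: field_simps)
  have t: "Tf a k q z 1 m = (1 - k*q^(2*Suc m))/(1-k) * qpoch z q (Suc m) * qpoch q q m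
     / (qpoch (q*k) q (Suc m) * qpoch (q*k/z) q (Suc m)) * (q*a/z)^Suc m
     * (qpoch (k/a) q m * qpoch k q (Suc (Suc m)) / (qpoch q q m * qpoch (a*q) q (Suc (Suc m))))"
    unfolding Tf_def Ef_def cc_def by simp
  have d1: "Df a k q z (Suc m) = qpoch z q (Suc m) * qpoch (k/a) q m * (q*a/z)^Suc m
     / (qpoch (q*k/z) q m * qpoch (a*q) q (Suc m) * (1 - q*a/z))"
    unfolding Df_def by simp
  have d2: "Df a k q z (Suc (Suc m)) = qpoch z q (Suc (Suc m)) * qpoch (k/a) q (Suc m) * (q*a/z)^Suc (Suc m)
     / (qpoch (q*k/z) q (Suc m) * qpoch (a*q) q (Suc (Suc m)) * (1 - q*a/z))"
    unfolding Df_def by simp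
  have hyp: "(1 - k*q^(2*Suc m)) * (z - q*a) = (z - k*q^Suc m)*(1 - a*q*q^Suc m) - (1 - z*q^Suc m)*(a - k*q^m)*q"
  proof -
    have pw: "q^(2*Suc m) = (q*q^m)*(q*q^m)" by (simp only: mult_2 power_add power_Suc)
    show ?thesis unfolding pw by (simp add: algebra_simps)
  qed
  show ?thesis
    unfolding t d1 d2 e1 e2 e3 e4 e5 e6 e7
    by (rule B_abs[OF _ _ _ _ _ _ _ _ _ _ hyp]) (use hk h_qk h_q h_qkz h_aq f_qkz f_aq[of "Suc m"] zqa z0 ha in simp_all)
qed

end



definition Ub :: "complex \<Rightarrow> real \<Rightarrow> real" where "Ub q R = exp (R / (1 - norm q))"
definition Minv :: "complex \<Rightarrow> complex \<Rightarrow> real" where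
  "Minv q x = (SOME M. M > 0 \<and> (\<forall>n. norm (inverse (qpoch x q n)) \<le> M))"

lemma Ub: "norm q < 1 \<Longrightarrow> norm x \<le> R \<Longrightarrow> norm (qpoch x q n) \<le> Ub q R"
  unfolding Ub_def by (rule qpoch_norm_upper)

lemma Minv: assumes "norm q < 1" "\<And>n. qpoch x q n \<noteq> 0"
  shows "Minv q x > 0" "norm (inverse (qpoch x q n)) \<le> Minv q x"
proof -
  have "\<exists>M. M > 0 \<and> (\<forall>n. norm (inverse (qpoch x q n)) \<le> M)" using qpoch_inv_bounded[OF assms] by blast
  hence "Minv q x > 0 \<and> (\<forall>n. norm (inverse (qpoch x q n)) \<le> Minv q x)"
    unfolding Minv_def by (rule someI_ex)
  thus "Minv q x > 0" "norm (inverse (qpoch x q n)) \<le> Minv q x" by auto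
qed

lemma nb_mult: "norm (x::complex) \<le> X \<Longrightarrow> norm y \<le> Y \<Longrightarrow> norm (x*y) \<le> X*Y"
  by (simp add: norm_mult mult_mono' order_trans[OF norm_ge_zero] mult_mono)
lemma nb_div: "norm (x::complex) \<le> X \<Longrightarrow> norm (inverse y) \<le> Y \<Longrightarrow> norm (x/y) \<le> X*Y"
  by (simp add: divide_inverse nb_mult)
lemma nb_invmult: "norm (inverse (x::complex)) \<le> X \<Longrightarrow> norm (inverse y) \<le> Y \<Longrightarrow> norm (inverse (x*y)) \<le> X*Y"
  by (simp add: inverse_mult_distrib nb_mult mult.commute)
lemma nb_pow: "norm (x::complex) \<le> X \<Longrightarrow> norm (x^n) \<le> X^n"
  by (simp add: norm_power power_mono)
lemma nb_refl: "norm (x::complex) \<le> norm x" by simp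

context wpsetup begin

definition "r = norm (q*a/z)"
lemma r_lt1: "r < 1" and r0: "r \<ge> 0"
  using hz z0 by (auto simp: r_def norm_mult norm_divide divide_less_eq)

lemma Minv_qk: "norm (inverse (qpoch (q*k) q n)) \<le> Minv q (q*k)" by (rule Minv(2)[OF hq h_qk])
lemma Minv_qkz: "norm (inverse (qpoch (q*k/z) q n)) \<le> Minv q (q*k/z)" by (rule Minv(2)[OF hq h_qkz])
lemma Minv_q: "norm (inverse (qpoch q q n)) \<le> Minv q q" by (rule Minv(2)[OF hq h_q])
lemma Minv_aq: "norm (inverse (qpoch (a*q) q n)) \<le> Minv q (a*q)" by (rule Minv(2)[OF hq h_aq])
lemma Ub_at: "norm (qpoch x q n) \<le> Ub q (norm x)" by (rule Ub[OF hq]) simp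

lemma Pf_bound: "norm (Pf a k q z j m) \<le> Ub q (norm z) * Ub q (norm q) * r ^ Suc (j+m)
   * (norm (inverse (1-k)) * Minv q (q*k) * Minv q (q*k/z)) * Ub q (norm (k/a)) * Ub q (norm k)
   * (Minv q q * Minv q (a*q))"
  unfolding Pf_def r_def
  by (intro nb_mult nb_div nb_invmult nb_pow Ub_at Minv_qk Minv_qkz Minv_q Minv_aq nb_refl)

lemma Vf_lim: "(\<lambda>m. Vf a k q z j m) \<longlonglongrightarrow> 0"
proof (rule Lim_null_comparison)
  define C where "C = Ub q (norm z) * Ub q (norm q)
   * (norm (inverse (1-k)) * Minv q (q*k) * Minv q (q*k/z)) * Ub q (norm (k/a)) * Ub q (norm k)
   * (Minv q q * Minv q (a*q))"
  show "\<forall>\<^sub>F m in sequentially. norm (Vf a k q z j m) \<le> norm (Kf a q z j) * (C * r^Suc j) * r^m"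
  proof (intro always_eventually allI)
    fix m
    have "norm (Vf a k q z j m) = norm (Kf a q z j) * norm (Pf a k q z j m)" by (simp add: Vf_def norm_mult)
    also have "\<dots> \<le> norm (Kf a q z j) * (C * r^Suc(j+m))"
      by (rule mult_left_mono) (use Pf_bound[of j m] in \<open>simp_all add: C_def mult_ac\<close>)
    also have "\<dots> = norm (Kf a q z j) * (C * r^Suc j) * r^m" by (simp add: power_add mult_ac)
    finally show "norm (Vf a k q z j m) \<le> norm (Kf a q z j) * (C * r^Suc j) * r^m" .
  qed
  show "(\<lambda>m. norm (Kf a q z j) * (C * r ^ Suc j) * r ^ m) \<longlonglongrightarrow> 0"
    by (intro tendsto_mult_right_zero LIMSEQ_power_zero) (use r_lt1 r0 in auto)
qed

lemma Df_lim: "(\<lambda>m. Df a k q z (Suc m)) \<longlonglongrightarrow> 0"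
proof (rule Lim_null_comparison)
  define C where "C = Ub q (norm z) * Ub q (norm (k/a)) * (Minv q (q*k/z) * Minv q (a*q) * norm (inverse (1 - q*a/z)))"
  show "\<forall>\<^sub>F m in sequentially. norm (Df a k q z (Suc m)) \<le> (C * r) * r^m"
  proof (intro always_eventually allI)
    fix m
    have "norm (Df a k q z (Suc m)) \<le> Ub q (norm z) * Ub q (norm (k/a)) * r^Suc m
        * (Minv q (q*k/z) * Minv q (a*q) * norm (inverse (1 - q*a/z)))"
      unfolding Df_def r_def
      by (intro nb_mult nb_div nb_invmult nb_pow Ub_at Minv_qk Minv_qkz Minv_q Minv_aq nb_refl)
    also have "\<dots> = (C * r) * r^m" by (simp add: C_def mult_ac)
    finally show "norm (Df a k q z (Suc m)) \<le> (C * r) * r^m" .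
  qed
  show "(\<lambda>m. C * r * r ^ m) \<longlonglongrightarrow> 0"
    by (intro tendsto_mult_right_zero LIMSEQ_power_zero) (use r_lt1 r0 in auto)
qed

lemma D1G1: "Df a k q z 1 = Gf a q z 1"
  by (simp add: Df_def Gf_def qpoch_Suc mult_ac)

lemma T_sums: "Tf a k q z (Suc i) sums Gf a q z (Suc i)"
proof (induction i)
  case 0
  have "(\<lambda>m. Df a k q z (Suc m) - Df a k q z (Suc (Suc m))) sums (Df a k q z (Suc 0) - 0)"
    by (rule telescope_sums'[OF Df_lim])
  thus ?case using B' D1G1 by simp
next
  case (Suc i)
  define j where "j = Suc i"
  have tel: "(\<lambda>m. Vf a k q z j (Suc m) - Vf a k q z j m) sums (0 - Vf a k q z j 0)"
    by (rule telescope_sums[OF Vf_lim])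
  hence t1: "(\<lambda>m. Tf a k q z (Suc j) m - rho a q z j * Tf a k q z j (Suc m)) sums (rho a q z j * Tf a k q z j 0)"
    using R1'[of j] R0'[of i] by (simp add: j_def)
  have "(\<lambda>m. Tf a k q z j (Suc m)) sums (Gf a q z j - Tf a k q z j 0)"
    using Suc.IH sums_Suc_iff[of "Tf a k q z j"] by (simp add: j_def)
  hence t2: "(\<lambda>m. rho a q z j * Tf a k q z j (Suc m)) sums (rho a q z j * (Gf a q z j - Tf a k q z j 0))"
    by (rule sums_mult)
  have "(\<lambda>m. (Tf a k q z (Suc j) m - rho a q z j * Tf a k q z j (Suc m)) + rho a q z j * Tf a k q z j (Suc m))
     sums (rho a q z j * Tf a k q z j 0 + rho a q z j * (Gf a q z j - Tf a k q z j 0))"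
    by (rule sums_add[OF t1 t2])
  hence "Tf a k q z (Suc j) sums (rho a q z j * Gf a q z j)" by (simp add: algebra_simps)
  thus ?case using G_rec[of i] by (simp add: j_def)
qed

end



lemma Q_abs:
  fixes E1 K1 Az Az2 Aq Aq2 Ak Akz W1 W2 C Ha Hz :: complex
  assumes "Ha \<noteq> 0" "Hz \<noteq> 0" "Ak \<noteq> 0" "Akz \<noteq> 0" "K1 \<noteq> 0"
  shows "E1/K1 * (Az*Az2) * (Aq*Aq2) / (Ak*Akz) * (W1*W2) * C
     = Az*Aq/(Ha*Hz)*W1 * (Ha * Hz * (E1/K1) * Az2 * Aq2 / (Ak*Akz) * W2 * C)"
  using assms by (simp add: field_simps)

lemma norm_1mk: "norm q \<le> 1 \<Longrightarrow> norm (1 - k * q^n) \<le> 1 + norm (k::complex)"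
proof -
  assume q: "norm q \<le> 1"
  have "norm (1 - k*q^n) \<le> norm (1::complex) + norm (k*q^n)" by (rule norm_triangle_ineq4)
  also have "norm (k*q^n) \<le> norm k" using q by (simp add: norm_mult norm_power power_le_one mult_left_le)
  finally show ?thesis by simp
qed

context wpsetup begin

definition Qf where
  "Qf i m = qpoch (q*a) q (Suc i) * qpoch (q*a/z) q (Suc i) * ((1 - k*q^(2*(Suc i+m)))/(1-k))
     * qpoch (z*q^Suc i) q m * qpoch (q*q^i) q m / (qpoch (q*k) q (Suc i+m) * qpoch (q*k/z) q (Suc i+m))
     * (q*a/z)^m * cc a k q (Suc i+m) (Suc i)"

lemma T_eq_GQ: "Tf a k q z (Suc i) m = Gf a q z (Suc i) * Qf i m"
proof -
  have e1: "qpoch z q (Suc i + m) = qpoch z q (Suc i) * qpoch (z*q^Suc i) q m" by (rule qpoch_add)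
  have e2: "qpoch q q (Suc i + m - 1) = qpoch q q i * qpoch (q*q^i) q m"
    using qpoch_add[of q q i m] by simp
  have e3: "(q*a/z)^(Suc i + m) = (q*a/z)^Suc i * (q*a/z)^m" by (rule power_add)
  show ?thesis
    unfolding Tf_def Ef_def Gf_def Qf_def e1 e2 e3 diff_Suc_1
    by (rule Q_abs) (use h_qa h_qaz h_qk h_qkz hk in auto)
qed

definition "CQ = Ub q (norm (q*a)) * Ub q (norm (q*a/z)) * ((1 + norm k) * norm (inverse (1-k)))
   * Ub q (norm z) * Ub q 1 * (Minv q (q*k) * Minv q (q*k/z)) * 1
   * (Ub q (norm (k/a)) * Ub q (norm k) * (Minv q q * Minv q (a*q)))"

lemma Qf_bound: "norm (Qf i m) \<le> CQ * r^m"
proof -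
  have u1: "norm (qpoch (z*q^Suc i) q m) \<le> Ub q (norm z)"
  proof (rule Ub[OF hq])
    have "norm q ^ Suc i \<le> 1" by (rule power_le_one) (use hq in auto)
    hence "norm z * norm q ^ Suc i \<le> norm z * 1" by (rule mult_left_mono) simp
    thus "norm (z*q^Suc i) \<le> norm z" by (simp only: norm_mult norm_power mult_1_right)
  qed
  have u2: "norm (qpoch (q*q^i) q m) \<le> Ub q 1"
    by (rule Ub[OF hq]) (use hq in \<open>simp add: norm_power power_le_one flip: power_Suc\<close>)
  have u3: "norm (1 - k*q^(2*(Suc i+m))) \<le> 1 + norm k" by (rule norm_1mk) (use hq in simp)
  have "norm (Qf i m) \<le> Ub q (norm (q*a)) * Ub q (norm (q*a/z)) * ((1 + norm k) * norm (inverse (1-k)))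
     * Ub q (norm z) * Ub q 1 * (Minv q (q*k) * Minv q (q*k/z)) * r^m
     * (Ub q (norm (k/a)) * Ub q (norm k) * (Minv q q * Minv q (a*q)))"
    unfolding Qf_def cc_def r_def
    by (intro nb_mult nb_div nb_invmult nb_pow Ub_at Minv_qk Minv_qkz Minv_q Minv_aq u1 u2 u3 nb_refl)
  also have "\<dots> = CQ * r^m" by (simp add: CQ_def mult_ac)
  finally show ?thesis .
qed

lemma CQ0: "CQ \<ge> 0"
proof -
  have "0 \<le> norm (Qf 0 0)" by simp
  also have "\<dots> \<le> CQ * r^0" by (rule Qf_bound)
  finally show ?thesis by simp
qed

lemma T_bound: "norm (Tf a k q z (Suc i) m) \<le> CQ * norm (Gf a q z (Suc i)) * r^m"
proof -
  have "norm (Tf a k q z (Suc i) m) = norm (Gf a q z (Suc i)) * norm (Qf i m)"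
    by (simp add: T_eq_GQ norm_mult)
  also have "\<dots> \<le> norm (Gf a q z (Suc i)) * (CQ * r^m)"
    by (rule mult_left_mono[OF Qf_bound]) simp
  finally show ?thesis by (simp add: mult_ac)
qed

end



context wpsetup begin

lemma main:
  fixes \<alpha> \<beta> :: "nat \<Rightarrow> complex"
  assumes \<alpha>0: "\<alpha> 0 = 1"
    and WP: "\<And>N. N > 0 \<Longrightarrow> \<beta> N = (\<Sum>j=0..N. cc a k q N j * \<alpha> j)"
    and S1: "summable (\<lambda>n. norm (Ef a k q z (Suc n) * \<beta> (Suc n)))"
    and S2: "summable (\<lambda>n. norm (Gf a q z (Suc n) * \<alpha> (Suc n)))"
    and S3: "summable (\<lambda>n. norm (Ef a k q z (Suc n) * cc a k q (Suc n) 0))"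
  shows "(\<Sum>n. Ef a k q z (Suc n) * \<beta> (Suc n)) - (\<Sum>n. Gf a q z (Suc n) * \<alpha> (Suc n))
       = (\<Sum>n. Ef a k q z (Suc n) * cc a k q (Suc n) 0)"
proof -
  define t1 where "t1 n = Ef a k q z (Suc n) * \<beta> (Suc n)" for n
  define t2 where "t2 n = Gf a q z (Suc n) * \<alpha> (Suc n)" for n
  define t3 where "t3 n = Ef a k q z (Suc n) * cc a k q (Suc n) 0" for n
  define p where "p i n = (if i \<le> n then Ef a k q z (Suc n) * cc a k q (Suc n) (Suc i) * \<alpha> (Suc i) else 0)" for i n
  have S1': "summable (\<lambda>n. norm (t1 n))" and S2': "summable (\<lambda>n. norm (t2 n))"
    and S3': "summable (\<lambda>n. norm (t3 n))" using S1 S2 S3 by (simp_all add: t1_def t2_def t3_def)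
  have A: "t1 n - t3 n = (\<Sum>i\<le>n. p i n)" for n
  proof -
    have "\<beta> (Suc n) = (\<Sum>j\<le>Suc n. cc a k q (Suc n) j * \<alpha> j)"
      using WP[of "Suc n"] by (simp add: atLeast0AtMost)
    also have "\<dots> = cc a k q (Suc n) 0 + (\<Sum>i\<le>n. cc a k q (Suc n) (Suc i) * \<alpha> (Suc i))"
      unfolding sum.atMost_Suc_shift by (simp add: \<alpha>0)
    finally have "t1 n = t3 n + (\<Sum>i\<le>n. Ef a k q z (Suc n) * cc a k q (Suc n) (Suc i) * \<alpha> (Suc i))"
      by (simp add: t1_def t3_def algebra_simps sum_distrib_left)
    also have "(\<Sum>i\<le>n. Ef a k q z (Suc n) * cc a k q (Suc n) (Suc i) * \<alpha> (Suc i)) = (\<Sum>i\<le>n. p i n)"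
      by (rule sum.cong) (auto simp: p_def)
    finally show ?thesis by simp
  qed
  have pshift: "p i (m + i) = Tf a k q z (Suc i) m * \<alpha> (Suc i)" for i m
    by (simp add: p_def Tf_def add_ac)
  have psum: "p i sums t2 i" for i
  proof -
    have "(\<lambda>m. p i (m + i)) sums t2 i"
      unfolding pshift t2_def by (rule sums_mult2[OF T_sums])
    hence "p i sums (t2 i + (\<Sum>n<i. p i n))" by (simp only: sums_iff_shift)
    moreover have "(\<Sum>n<i. p i n) = 0" by (auto simp: p_def)
    ultimately show ?thesis by simp
  qed
  define b where "b i n = (if i \<le> n then CQ * norm (t2 i) * r^(n-i) else 0)" for i n
  have bsum: "b i sums (CQ * norm (t2 i) / (1 - r))" for i
  proof -
    have "(\<lambda>m. CQ * norm (t2 i) * r^m) sums (CQ * norm (t2 i) * (1 / (1 - r)))"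
      by (rule sums_mult[OF geometric_sums]) (use r0 r_lt1 in auto)
    hence "(\<lambda>m. b i (m + i)) sums (CQ * norm (t2 i) / (1 - r))" by (simp add: b_def)
    hence "b i sums (CQ * norm (t2 i) / (1 - r) + (\<Sum>n<i. b i n))" by (simp only: sums_iff_shift)
    moreover have "(\<Sum>n<i. b i n) = 0" by (auto simp: b_def)
    ultimately show ?thesis by simp
  qed
  have pb: "norm (p i n) \<le> b i n" for i n
  proof (cases "i \<le> n")
    case True
    then obtain m where n: "n = m + i" by (metis add.commute le_add_diff_inverse)
    have "norm (p i n) = norm (Tf a k q z (Suc i) m) * norm (\<alpha> (Suc i))" by (simp add: n pshift norm_mult)
    also have "\<dots> \<le> CQ * norm (Gf a q z (Suc i)) * r^m * norm (\<alpha> (Suc i))"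
      by (rule mult_right_mono[OF T_bound]) simp
    also have "\<dots> = b i n" by (simp add: b_def n t2_def norm_mult mult_ac)
    finally show ?thesis .
  qed (simp add: p_def b_def)
  have pns: "summable (\<lambda>n. norm (p i n))" for i
    by (rule summable_comparison_test[OF _ sums_summable[OF bsum]]) (use pb in auto)
  have pnb: "(\<Sum>n. norm (p i n)) \<le> CQ / (1 - r) * norm (t2 i)" for i
  proof -
    have "(\<Sum>n. norm (p i n)) \<le> (\<Sum>n. b i n)"
      by (rule suminf_le[OF pb pns sums_summable[OF bsum]])
    also have "\<dots> = CQ / (1 - r) * norm (t2 i)" using bsum[of i] by (simp add: sums_iff)
    finally show ?thesis .
  qed
  have hp: "(p i has_sum t2 i) UNIV" for i
    by (rule norm_summable_imp_has_sum[OF pns psum])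
  have infn: "infsum (\<lambda>n. norm (p i n)) UNIV = (\<Sum>n. norm (p i n))" for i
  proof (rule infsumI, rule norm_summable_imp_has_sum)
    show "summable (\<lambda>n. norm (norm (p i n)))" using pns by simp
    show "(\<lambda>n. norm (p i n)) sums (\<Sum>n. norm (p i n))" using pns by (rule summable_sums)
  qed
  define c where "c = CQ / (1 - r)"
  have c0: "c \<ge> 0" using CQ0 r_lt1 by (simp add: c_def)
  have pnb': "(\<Sum>n. norm (p i n)) \<le> c * norm (t2 i)" for i using pnb[of i] by (simp add: c_def)
  have absg: "(\<lambda>x. norm ((\<lambda>(i,n). p i n) x)) summable_on (UNIV \<times> UNIV)"
  proof (rule Infinite_Sum.abs_summable_on_Sigma_iff[THEN iffD2], intro conjI ballI)
    fix i :: nat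
    show "(\<lambda>n. norm (case (i, n) of (i, n) \<Rightarrow> p i n)) summable_on UNIV"
      using norm_summable_imp_summable_on[of "\<lambda>n. norm (p i n)"] pns by simp
  next
    have g: "(\<lambda>i. norm (complex_of_real (c) * t2 i)) summable_on UNIV"
    proof (rule norm_summable_imp_summable_on)
      show "summable (\<lambda>i. norm (norm (complex_of_real (c) * t2 i)))"
        using summable_mult[OF S2', of "c"] c0 by (simp add: norm_mult abs_mult)
    qed
    show "(\<lambda>i. norm (infsum (\<lambda>n. norm (case (i, n) of (i, n) \<Rightarrow> p i n)) UNIV)) summable_on UNIV"
    proof (rule Infinite_Sum.abs_summable_on_comparison_test[OF g])
      fix i :: nat
      have "norm (infsum (\<lambda>n. norm (case (i, n) of (i, n) \<Rightarrow> p i n)) UNIV) = (\<Sum>n. norm (p i n))"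
        using infn[of i] suminf_nonneg[OF pns] by simp
      also have "\<dots> \<le> c * norm (t2 i)" by (rule pnb')
      also have "\<dots> = norm (complex_of_real (c) * t2 i)" using c0 by (simp add: norm_mult)
      finally show "norm (infsum (\<lambda>n. norm (case (i, n) of (i, n) \<Rightarrow> p i n)) UNIV)
          \<le> norm (complex_of_real (c) * t2 i)" .
    qed
  qed
  have swap: "infsum (\<lambda>i. infsum (\<lambda>n. p i n) UNIV) UNIV = infsum (\<lambda>n. infsum (\<lambda>i. p i n) UNIV) UNIV"
    by (rule infsum_swap_banach[OF Infinite_Sum.abs_summable_summable[OF absg]])
  have L: "infsum (\<lambda>i. infsum (\<lambda>n. p i n) UNIV) UNIV = (\<Sum>n. t2 n)"
  proof -
    have "infsum (\<lambda>i. infsum (\<lambda>n. p i n) UNIV) UNIV = infsum t2 UNIV"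
    proof -
      have "infsum (p i) UNIV = t2 i" for i by (rule infsumI[OF hp])
      thus ?thesis by simp
    qed
    also have "\<dots> = (\<Sum>n. t2 n)"
      by (rule infsumI, rule norm_summable_imp_has_sum[OF S2' summable_sums[OF summable_norm_cancel[OF S2']]])
    finally show ?thesis .
  qed
  have S13: "summable (\<lambda>n. norm (t1 n - t3 n))"
    by (rule summable_comparison_test[OF _ summable_add[OF S1' S3']]) (auto intro: norm_triangle_ineq4)
  have R: "infsum (\<lambda>n. infsum (\<lambda>i. p i n) UNIV) UNIV = (\<Sum>n. t1 n - t3 n)"
  proof -
    have "infsum (\<lambda>i. p i n) UNIV = t1 n - t3 n" for n
    proof (rule infsumI, rule has_sum_finite_neutralI[of "{..n}"])
      show "t1 n - t3 n = sum (\<lambda>i. p i n) {..n}" by (rule A)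
    qed (auto simp: p_def)
    hence "infsum (\<lambda>n. infsum (\<lambda>i. p i n) UNIV) UNIV = infsum (\<lambda>n. t1 n - t3 n) UNIV" by simp
    also have "\<dots> = (\<Sum>n. t1 n - t3 n)"
      by (rule infsumI, rule norm_summable_imp_has_sum[OF S13 summable_sums[OF summable_norm_cancel[OF S13]]])
    finally show ?thesis .
  qed
  have "(\<Sum>n. t1 n - t3 n) = (\<Sum>n. t1 n) - (\<Sum>n. t3 n)"
    by (rule suminf_diff[OF summable_norm_cancel[OF S1'] summable_norm_cancel[OF S3'], symmetric])
  hence "(\<Sum>n. t1 n) - (\<Sum>n. t3 n) = (\<Sum>n. t2 n)" using swap L R by simp
  thus ?thesis unfolding t1_def t2_def t3_def by (simp add: algebra_simps)
qed

end

lemma ratio_abs: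
  fixes P R X Y U1 U2 :: complex
  assumes "P \<noteq> 0" "R \<noteq> 0" "U1 \<noteq> 0" "U2 \<noteq> 0"
  shows "P * X / U1 * (R * Y / U2) / (P * R) = (X * Y) / (U1 * U2)"
  using assms by (simp add: field_simps)

lemma csqrt_ratio:
  fixes k q :: complex and N :: nat
  assumes "qpoch (csqrt k) q N \<noteq> 0" "qpoch (- csqrt k) q N \<noteq> 0" "1 - csqrt k \<noteq> 0" "1 + csqrt k \<noteq> 0"
  shows "qpoch (q * csqrt k) q N * qpoch (- q * csqrt k) q N / (qpoch (csqrt k) q N * qpoch (- csqrt k) q N)
     = (1 - k * q^(2*N)) / (1 - k)"
proof -
  define u where "u = csqrt k"
  have ss: "u * u = k" unfolding u_def by (metis power2_csqrt power2_eq_square)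
  have h1: "qpoch (q*u) q N * (1 - u) = qpoch u q N * (1 - u*q^N)" by (rule qpoch_shift)
  have h2: "qpoch (q*(-u)) q N * (1 - (-u)) = qpoch (-u) q N * (1 - (-u)*q^N)" by (rule qpoch_shift)
  have h2': "qpoch (- q * u) q N * (1 + u) = qpoch (-u) q N * (1 + u*q^N)" using h2 by simp
  have A: "qpoch (q * u) q N = qpoch u q N * (1 - u*q^N) / (1 - u)"
    using h1 assms(3) unfolding u_def[symmetric] by (simp add: field_simps)
  have B: "qpoch (- q * u) q N = qpoch (-u) q N * (1 + u*q^N) / (1 + u)"
    using h2' assms(4) unfolding u_def[symmetric] by (simp add: field_simps)
  have "qpoch (q * u) q N * qpoch (- q * u) q N / (qpoch u q N * qpoch (- u) q N)
      = ((1 - u*q^N) * (1 + u*q^N)) / ((1 - u) * (1 + u))"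
    unfolding A B by (rule ratio_abs) (use assms in \<open>simp_all add: u_def\<close>)
  also have "\<dots> = (1 - k * q^(2*N)) / (1 - k)"
  proof -
    have pw: "q^(2*N) = q^N*q^N" by (simp only: mult_2 power_add)
    show ?thesis unfolding pw ss[symmetric] by (simp add: algebra_simps)
  qed
  finally show ?thesis unfolding u_def .
qed

lemma conv1_abs:
  fixes A B C D Z Q K KZ W X :: complex
  assumes "C \<noteq> 0" "D \<noteq> 0" "K \<noteq> 0" "KZ \<noteq> 0"
  shows "A * B * Z * Q / (C * D * K * KZ) * W * X = (A * B / (C * D)) * Z * Q / (K * KZ) * W * X"
  using assms by (simp add: field_simps)

lemma conv3_abs:
  fixes A B C D Z Qn K KZ W KA Kk QA F :: complex
  assumes "C \<noteq> 0" "D \<noteq> 0" "K \<noteq> 0" "KZ \<noteq> 0" "Qn \<noteq> 0" "QA \<noteq> 0" "F \<noteq> 0"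
  shows "A * B * Kk * Z * KA / (C * D * K * KZ * QA * F) * W
     = (A * B / (C * D)) * Z * Qn / (K * KZ) * W * (KA * Kk / ((Qn * F) * QA))"
  using assms by (simp add: field_simps)

theorem lemma2p1:
  fixes a k q z :: complex and \<alpha> \<beta> :: "nat \<Rightarrow> complex"
  assumes hq: "norm q < 1"
    and hWP: "WP_Bailey_pair a k q \<alpha> \<beta>"
    and hz: "norm (q * a) < norm z"
    and ha: "a \<noteq> 0"
    and hden1: "\<And>n. qpoch q q n \<noteq> 0"
    and hden2: "\<And>n. qpoch (a * q) q n \<noteq> 0"
    and hden3: "\<And>n. qpoch (csqrt k) q n * qpoch (- csqrt k) q n * qpoch (q * k) q n
                        * qpoch (q * k / z) q n \<noteq> 0"
    and hden4: "\<And>n. qpoch (q * a) q n * qpoch (q * a / z) q n \<noteq> 0"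
    and hden5: "\<And>n. n \<ge> 1 \<Longrightarrow> 1 - q ^ n \<noteq> 0"
    and hconv1: "summable (\<lambda>n. norm (
        qpoch (q * csqrt k) q (Suc n) * qpoch (- q * csqrt k) q (Suc n) * qpoch z q (Suc n)
          * qpoch q q n
        / (qpoch (csqrt k) q (Suc n) * qpoch (- csqrt k) q (Suc n) * qpoch (q * k) q (Suc n)
           * qpoch (q * k / z) q (Suc n))
        * (q * a / z) ^ Suc n * \<beta> (Suc n)))"
    and hconv2: "summable (\<lambda>n. norm (
        qpoch z q (Suc n) * qpoch q q n / (qpoch (q * a) q (Suc n) * qpoch (q * a / z) q (Suc n))
        * (q * a / z) ^ Suc n * \<alpha> (Suc n)))"
    and hconv3: "summable (\<lambda>n. norm (
        qpoch (q * csqrt k) q (Suc n) * qpoch (- q * csqrt k) q (Suc n) * qpoch k q (Suc n)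
          * qpoch z q (Suc n) * qpoch (k / a) q (Suc n)
        / (qpoch (csqrt k) q (Suc n) * qpoch (- csqrt k) q (Suc n) * qpoch (q * k) q (Suc n)
           * qpoch (q * k / z) q (Suc n) * qpoch (q * a) q (Suc n) * (1 - q ^ Suc n))
        * (q * a / z) ^ Suc n))"
  shows "(\<Sum>n. qpoch (q * csqrt k) q (Suc n) * qpoch (- q * csqrt k) q (Suc n) * qpoch z q (Suc n)
          * qpoch q q n
        / (qpoch (csqrt k) q (Suc n) * qpoch (- csqrt k) q (Suc n) * qpoch (q * k) q (Suc n)
           * qpoch (q * k / z) q (Suc n))
        * (q * a / z) ^ Suc n * \<beta> (Suc n))
       - (\<Sum>n. qpoch z q (Suc n) * qpoch q q n
            / (qpoch (q * a) q (Suc n) * qpoch (q * a / z) q (Suc n))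
        * (q * a / z) ^ Suc n * \<alpha> (Suc n))
       = (\<Sum>n. qpoch (q * csqrt k) q (Suc n) * qpoch (- q * csqrt k) q (Suc n) * qpoch k q (Suc n)
          * qpoch z q (Suc n) * qpoch (k / a) q (Suc n)
        / (qpoch (csqrt k) q (Suc n) * qpoch (- csqrt k) q (Suc n) * qpoch (q * k) q (Suc n)
           * qpoch (q * k / z) q (Suc n) * qpoch (q * a) q (Suc n) * (1 - q ^ Suc n))
        * (q * a / z) ^ Suc n)"
  proof -
  have hd3: "qpoch (csqrt k) q n \<noteq> 0" "qpoch (- csqrt k) q n \<noteq> 0" "qpoch (q * k) q n \<noteq> 0"
      "qpoch (q * k / z) q n \<noteq> 0" for n using hden3[of n] by auto
  have hd4: "qpoch (q * a) q n \<noteq> 0" "qpoch (q * a / z) q n \<noteq> 0" for n using hden4[of n] by auto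
  have s1: "1 - csqrt k \<noteq> 0" using hd3(1)[of 1] by (simp add: qpoch_def)
  have s2: "1 + csqrt k \<noteq> 0" using hd3(2)[of 1] by (simp add: qpoch_def)
  have hk: "1 - k \<noteq> 0"
  proof
    assume "1 - k = 0"
    hence "(1 - csqrt k) * (1 + csqrt k) = 0"
      by (simp add: algebra_simps power2_eq_square[symmetric])
    thus False using s1 s2 by simp
  qed
  interpret wpsetup a k q z
    by unfold_locales (use hq hz ha hk hden1 hden2 hd3 hd4 in auto)
  have WP: "\<alpha> 0 = 1" "\<And>N. N > 0 \<Longrightarrow> \<beta> N = (\<Sum>j=0..N. cc a k q N j * \<alpha> j)"
    using hWP unfolding WP_Bailey_pair_def cc_def by auto
  have ratio: "qpoch (q * csqrt k) q N * qpoch (- q * csqrt k) q N / (qpoch (csqrt k) q N * qpoch (- csqrt k) q N)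
     = (1 - k * q^(2*N)) / (1 - k)" for N
    by (rule csqrt_ratio) (use hd3 s1 s2 in auto)
  have e1: "qpoch (q * csqrt k) q (Suc n) * qpoch (- q * csqrt k) q (Suc n) * qpoch z q (Suc n)
          * qpoch q q n
        / (qpoch (csqrt k) q (Suc n) * qpoch (- csqrt k) q (Suc n) * qpoch (q * k) q (Suc n)
           * qpoch (q * k / z) q (Suc n))
        * (q * a / z) ^ Suc n * \<beta> (Suc n) = Ef a k q z (Suc n) * \<beta> (Suc n)" for n
    unfolding conv1_abs[OF hd3(1,2,3,4)] ratio Ef_def by simp
  have e2: "qpoch z q (Suc n) * qpoch q q n / (qpoch (q * a) q (Suc n) * qpoch (q * a / z) q (Suc n))
        * (q * a / z) ^ Suc n * \<alpha> (Suc n) = Gf a q z (Suc n) * \<alpha> (Suc n)" for n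
    unfolding Gf_def by simp
  have e3: "qpoch (q * csqrt k) q (Suc n) * qpoch (- q * csqrt k) q (Suc n) * qpoch k q (Suc n)
          * qpoch z q (Suc n) * qpoch (k / a) q (Suc n)
        / (qpoch (csqrt k) q (Suc n) * qpoch (- csqrt k) q (Suc n) * qpoch (q * k) q (Suc n)
           * qpoch (q * k / z) q (Suc n) * qpoch (q * a) q (Suc n) * (1 - q ^ Suc n))
        * (q * a / z) ^ Suc n = Ef a k q z (Suc n) * cc a k q (Suc n) 0" for n
  proof -
    have qs: "qpoch q q (Suc n) = qpoch q q n * (1 - q ^ Suc n)" by (simp add: qpoch_Suc)
    have aq: "qpoch (a*q) q (Suc n) = qpoch (q*a) q (Suc n)" by (simp add: mult.commute)
    have "qpoch (q * csqrt k) q (Suc n) * qpoch (- q * csqrt k) q (Suc n) * qpoch k q (Suc n)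
          * qpoch z q (Suc n) * qpoch (k / a) q (Suc n)
        / (qpoch (csqrt k) q (Suc n) * qpoch (- csqrt k) q (Suc n) * qpoch (q * k) q (Suc n)
           * qpoch (q * k / z) q (Suc n) * qpoch (q * a) q (Suc n) * (1 - q ^ Suc n))
        * (q * a / z) ^ Suc n
      = (qpoch (q * csqrt k) q (Suc n) * qpoch (- q * csqrt k) q (Suc n) / (qpoch (csqrt k) q (Suc n) * qpoch (- csqrt k) q (Suc n)))
        * qpoch z q (Suc n) * qpoch q q n / (qpoch (q * k) q (Suc n) * qpoch (q * k / z) q (Suc n)) * (q * a / z) ^ Suc n
        * (qpoch (k / a) q (Suc n) * qpoch k q (Suc n) / ((qpoch q q n * (1 - q ^ Suc n)) * qpoch (q * a) q (Suc n)))"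
      by (rule conv3_abs) (use hd3 hden1 hd4 hden5[of "Suc n"] in auto)
    also have "\<dots> = Ef a k q z (Suc n) * cc a k q (Suc n) 0"
      unfolding ratio Ef_def cc_def qs[symmetric] by (simp add: mult.commute[of a q])
    finally show ?thesis .
  qed
  show ?thesis
    unfolding e1 e2 e3
    by (rule main[OF WP]) (use hconv1 hconv2 hconv3 in \<open>simp_all only: e1 e2 e3\<close>)
qed

end
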